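(* Let $L$ be an oriented, ordered, compatible virtual link diagram with affine bilabeling $C$. Then the multi-variable affine index polynomial $p_{(L,C)}$ is a Vassiliev invariant of order one of the pair $(L,C)$. That is: - its extension vanishes on every compatible singular virtual link (with the induced coloring) having two or more double points; and - it does not vanish on every compatible singular virtual link with one double point. As a consequence, the following are also Vassiliev invariants of order one: - the Affine Index Polynomial $P_K(t)$ of virtual knots; and - Kauffman's affine index polynomial $P_L(t)$ of compatible virtual links with a given affine labeling.
   Context: **Diagrams.** A virtual link diagram is an oriented planar diagram of ordered closed curves $L_1,\dots,L_n$ (components) with classical crossings (with over/under information) and virtual crossings, up to classical and virtual Reidemeister moves. **Crossing conventions.** Draw a classical crossing with both strands oriented upward. - The bottom-left-to-top-right strand has index change $-1$; the bottom-right-to-top-left strand has index change $+1$. - The crossing is positive ($\operatorname{sgn}=+1$) if the overstrand is the bottom-left-to-top-right strand, and negative otherwise. - Self-crossings have both strands on one component; external crossings have strands on different components. - $L$ is compatible if, for each $i$, the sum of index changes of $L_i$ over its passages through external classical crossings is $0$. **Affine bilabeling $C$.** - Each component $L_i$ gets a starting point with bilabel $(a^{(i)}_1,a^{(i)}_2)$ of formal integer variables, distinct for different components. - The bilabel is carried along $L_i$ in its orientation and is unchanged at virtual crossings. - On passing a classical crossing with index change $\varepsilon$, the first entry changes by $\varepsilon$ at a self-crossing, and the second entry changes by $\varepsilon$ at an external crossing. **Weights and polynomial.** Let $|(x,y)|=x+y$. With both strands drawn upward: - if $c$ is positive, $W(c)=|\text{bottom-left}|-|\text{top-left}|$; - if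 $c$ is negative, $W(c)=|\text{bottom-right}|-|\text{top-right}|$. Then $p_{(L,C)}(t_1,\dots,t_n)=\sum_c\operatorname{sgn}(c)(t_{o(c)}^{W(c)}-1)$, summed over classical crossings, where $o(c)$ is the component of the overstrand. **Kauffman's polynomial.** - A single label per component is propagated by adding the index change at every classical crossing. - Weights are the same differences of single labels. - $P_L(t)=\sum_c\operatorname{sgn}(c)(t^{W(c)}-1)$. - For a virtual knot this is the Affine Index Polynomial $P_K(t)$. **Vassiliev invariants.** - A singular virtual link also has finitely many double points. - An invariant $V$ is extended to singular links by $V(L_\times)=V(L_+)-V(L_-)$, where $L_\pm$ replace a double point by a positive/negative classical crossing; this is applied iteratively. - Colorings of singular links are obtained by treating double points as crossings for label propagation. Label propagation does not depend on crossing sign, so all resolutions inherit the same labels. - $V$ has order $\le m$ if its extension vanishes on all singular links with more than $m$ double points. - Order one means order $\le 1$ but not order $\le 0$. *)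

theory Defs
  imports Main
begin

text \<open>Combinatorial (Gauss-code) model of oriented, ordered singular virtual link
diagrams.  Drawing a
crossing with both strands oriented upward, the strand SL runs bottom-left to top-right
(index change -1) and SR runs bottom-right to top-left (index change +1).  Each
component is the list of passages through crossings, read along its orientation starting
from its starting point.  Virtual crossings are invisible in this model (they do not
affect labels); every such Gauss code is realised by a virtual diagram.\<close>

datatype ctype = Pos | Neg | Dbl
datatype strand = SL | SR

record vdiagram =
  comps :: "(nat \<times> strand) list list"
  ncross :: nat
  ctyp :: "nat \<Rightarrow> ctype"

definition wf_diagram :: "vdiagram \<Rightarrow> bool" where
  "wf_diagram D \<longleftrightarrow> comps D \<noteq> [] \<and> distinct (concat (comps D))
     \<and> set (concat (comps D)) = {0..<ncross D} \<times> UNIV"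

definition idx_change :: "strand \<Rightarrow> int" where
  "idx_change s = (case s of SL \<Rightarrow> -1 | SR \<Rightarrow> 1)"

definition comp_of :: "vdiagram \<Rightarrow> nat \<times> strand \<Rightarrow> nat" where
  "comp_of D p = (THE i. i < length (comps D) \<and> p \<in> set (comps D ! i))"

definition pos_of :: "vdiagram \<Rightarrow> nat \<times> strand \<Rightarrow> nat" where
  "pos_of D p = (THE j. j < length (comps D ! comp_of D p) \<and> comps D ! comp_of D p ! j = p)"

definition is_self :: "vdiagram \<Rightarrow> nat \<Rightarrow> bool" where
  "is_self D k \<longleftrightarrow> comp_of D (k, SL) = comp_of D (k, SR)"

definition dbls :: "vdiagram \<Rightarrow> nat set" where
  "dbls D = {k. k < ncross D \<and> ctyp D k = Dbl}"

definition classical_crossings :: "vdiagram \<Rightarrow> nat set" where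
  "classical_crossings D = {k. k < ncross D \<and> ctyp D k \<noteq> Dbl}"

text \<open>Compatibility (double points are counted as crossings; their index changes are
the same in both resolutions).\<close>
definition compatible :: "vdiagram \<Rightarrow> bool" where
  "compatible D \<longleftrightarrow> (\<forall>i < length (comps D).
     (\<Sum>p\<leftarrow>comps D ! i. if is_self D (fst p) then 0 else idx_change (snd p)) = 0)"

definition csign :: "vdiagram \<Rightarrow> nat \<Rightarrow> int" where
  "csign D k = (case ctyp D k of Pos \<Rightarrow> 1 | Neg \<Rightarrow> -1 | Dbl \<Rightarrow> 0)"

definition over_comp :: "vdiagram \<Rightarrow> nat \<Rightarrow> nat" where
  "over_comp D k = (case ctyp D k of Pos \<Rightarrow> comp_of D (k, SL) | _ \<Rightarrow> comp_of D (k, SR))"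

subsection \<open>Formal linear forms in the variables a^(i)_j (j = 1,2), plus a constant\<close>

type_synonym lform = "(nat \<times> nat \<Rightarrow> int) \<times> int"

definition lvar :: "nat \<times> nat \<Rightarrow> lform" where
  "lvar v = ((\<lambda>w. if w = v then 1 else 0), 0)"
definition lconst :: "int \<Rightarrow> lform" where
  "lconst c = ((\<lambda>_. 0), c)"
definition ladd :: "lform \<Rightarrow> lform \<Rightarrow> lform" where
  "ladd x y = ((\<lambda>w. fst x w + fst y w), snd x + snd y)"
definition lsub :: "lform \<Rightarrow> lform \<Rightarrow> lform" where
  "lsub x y = ((\<lambda>w. fst x w - fst y w), snd x - snd y)"

text \<open>Bilabel on component i just before its j-th passage (0-based); the start bilabel
of component i is (a^(i)_1, a^(i)_2) = (lvar (i,1), lvar (i,2)).\<close>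
definition bilabel_before :: "vdiagram \<Rightarrow> nat \<Rightarrow> nat \<Rightarrow> lform \<times> lform" where
  "bilabel_before D i j =
     (ladd (lvar (i, 1)) (lconst (\<Sum>p\<leftarrow>take j (comps D ! i).
         if is_self D (fst p) then idx_change (snd p) else 0)),
      ladd (lvar (i, 2)) (lconst (\<Sum>p\<leftarrow>take j (comps D ! i).
         if is_self D (fst p) then 0 else idx_change (snd p))))"

definition bilab_in :: "vdiagram \<Rightarrow> nat \<times> strand \<Rightarrow> lform \<times> lform" where
  "bilab_in D p = bilabel_before D (comp_of D p) (pos_of D p)"
definition bilab_out :: "vdiagram \<Rightarrow> nat \<times> strand \<Rightarrow> lform \<times> lform" where
  "bilab_out D p = bilabel_before D (comp_of D p) (Suc (pos_of D p))"

definition bnorm :: "lform \<times> lform \<Rightarrow> lform" where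
  "bnorm x = ladd (fst x) (snd x)"

text \<open>Positive: |bottom-left| - |top-left|; negative: |bottom-right| - |top-right|.\<close>
definition mweight :: "vdiagram \<Rightarrow> nat \<Rightarrow> lform" where
  "mweight D k = (case ctyp D k of
      Pos \<Rightarrow> lsub (bnorm (bilab_in D (k, SL))) (bnorm (bilab_out D (k, SR)))
    | _ \<Rightarrow> lsub (bnorm (bilab_in D (k, SR))) (bnorm (bilab_out D (k, SL))))"

text \<open>Monomials t_o^W: None is the monomial 1, Some (o, W) with W nonzero is t_o^W.
A formal sum of monomials is a (finitely supported) coefficient function.\<close>
definition mono :: "nat \<Rightarrow> lform \<Rightarrow> (nat \<times> lform) option" where
  "mono c W = (if W = lconst 0 then None else Some (c, W))"

definition mvaip :: "vdiagram \<Rightarrow> (nat \<times> lform) option \<Rightarrow> int" where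
  "mvaip D = (\<lambda>m. \<Sum>k\<in>classical_crossings D.
      csign D k * ((if mono (over_comp D k) (mweight D k) = m then 1 else 0)
                   - (if m = None then 1 else 0)))"

definition label_before :: "vdiagram \<Rightarrow> (nat \<Rightarrow> int) \<Rightarrow> nat \<Rightarrow> nat \<Rightarrow> int" where
  "label_before D b i j = b i + (\<Sum>p\<leftarrow>take j (comps D ! i). idx_change (snd p))"

definition lab_in :: "vdiagram \<Rightarrow> (nat \<Rightarrow> int) \<Rightarrow> nat \<times> strand \<Rightarrow> int" where
  "lab_in D b p = label_before D b (comp_of D p) (pos_of D p)"
definition lab_out :: "vdiagram \<Rightarrow> (nat \<Rightarrow> int) \<Rightarrow> nat \<times> strand \<Rightarrow> int" where
  "lab_out D b p = label_before D b (comp_of D p) (Suc (pos_of D p))"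

definition kweight :: "vdiagram \<Rightarrow> (nat \<Rightarrow> int) \<Rightarrow> nat \<Rightarrow> int" where
  "kweight D b k = (case ctyp D k of
      Pos \<Rightarrow> lab_in D b (k, SL) - lab_out D b (k, SR)
    | _ \<Rightarrow> lab_in D b (k, SR) - lab_out D b (k, SL))"

text \<open>Laurent polynomial in t as coefficient function on exponents.\<close>
definition kaip :: "vdiagram \<Rightarrow> (nat \<Rightarrow> int) \<Rightarrow> int \<Rightarrow> int" where
  "kaip D b = (\<lambda>e. \<Sum>k\<in>classical_crossings D.
      csign D k * ((if kweight D b k = e then 1 else 0) - (if e = 0 then 1 else 0)))"

definition resolve :: "vdiagram \<Rightarrow> nat set \<Rightarrow> vdiagram" where
  "resolve D S = D\<lparr>ctyp := (\<lambda>k. if ctyp D k = Dbl then (if k \<in> S then Pos else Neg)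
                                 else ctyp D k)\<rparr>"

text \<open>Iterating V(L_x) = V(L_+) - V(L_-) over all double points.\<close>
definition vext :: "(vdiagram \<Rightarrow> 'k \<Rightarrow> int) \<Rightarrow> vdiagram \<Rightarrow> 'k \<Rightarrow> int" where
  "vext V D = (\<lambda>m. \<Sum>S\<in>Pow (dbls D). (-1::int) ^ card (dbls D - S) * V (resolve D S) m)"

end

theory Submission
  imports Defs
begin


lemma pow_cancel:
  assumes "finite T" "j \<in> T" "\<And>S. S \<subseteq> T - {j} \<Longrightarrow> F (insert j S) = - F S"
  shows "(\<Sum>S\<in>Pow T. F S) = (0::int)"
proof -
  have T: "T = insert j (T - {j})" using assms(2) by auto
  have "Pow T = Pow (T - {j}) \<union> insert j ` Pow (T - {j})"
    by (metis Pow_insert T)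
  moreover have "Pow (T - {j}) \<inter> insert j ` Pow (T - {j}) = {}" by auto
  moreover have "inj_on (insert j) (Pow (T - {j}))"
    unfolding inj_on_def by (metis Diff_iff PowD insert_ident insertI1 subset_iff)
  ultimately have "(\<Sum>S\<in>Pow T. F S) = (\<Sum>S\<in>Pow (T-{j}). F S) + (\<Sum>S\<in>Pow (T-{j}). F (insert j S))"
    using assms(1) by (simp add: sum.union_disjoint sum.reindex)
  also have "(\<Sum>S\<in>Pow (T-{j}). F (insert j S)) = (\<Sum>S\<in>Pow (T-{j}). - F S)"
    by (rule sum.cong) (auto intro: assms(3))
  also have "(\<Sum>S\<in>Pow (T-{j}). F S) + (\<Sum>S\<in>Pow (T-{j}). - F S) = 0" by (simp add: sum_negf)
  finally show ?thesis .
qed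

lemma alt_single:
  assumes "finite T" "2 \<le> card T"
  shows "(\<Sum>S\<in>Pow T. (-1::int) ^ card (T - S) * g (k \<in> S)) = 0"
proof -
  obtain j where j: "j \<in> T" "j \<noteq> k"
  proof -
    have "\<not> T \<subseteq> {k}" using assms card_mono[of "{k}" T] by (metis card_mono card.insert card.empty finite.intros empty_iff One_nat_def not_less_eq_eq numeral_2_eq_2 order.trans)
    then show ?thesis using that by auto
  qed
  show ?thesis
  proof (rule pow_cancel[OF assms(1) j(1)])
    fix S assume S: "S \<subseteq> T - {j}"
    have "card (T - S) = Suc (card (T - insert j S))"
    proof -
      have "T - S = insert j (T - insert j S)" using S j by auto
      moreover have "j \<notin> T - insert j S" by auto
      ultimately show ?thesis using assms(1) by (metis card_insert_disjoint finite_Diff)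
    qed
    moreover have "(k \<in> insert j S) = (k \<in> S)" using j by auto
    ultimately show "(-1::int) ^ card (T - insert j S) * g (k \<in> insert j S) = - ((-1) ^ card (T - S) * g (k \<in> S))"
      by simp
  qed
qed

lemma alt_sum:
  assumes "finite T" "2 \<le> card T" "finite K"
  shows "(\<Sum>S\<in>Pow T. (-1::int) ^ card (T - S) * (\<Sum>k\<in>K. f k (k \<in> S))) = 0"
proof -
  have "(\<Sum>S\<in>Pow T. (-1::int) ^ card (T - S) * (\<Sum>k\<in>K. f k (k \<in> S)))
      = (\<Sum>k\<in>K. \<Sum>S\<in>Pow T. (-1::int) ^ card (T - S) * f k (k \<in> S))"
    by (simp add: sum_distrib_left sum.swap[of _ "Pow T"])
  also have "\<dots> = 0" using alt_single[OF assms(1,2)] by simp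
  finally show ?thesis .
qed


definition mterm where
  "mterm E k m = csign E k * ((if mono (over_comp E k) (mweight E k) = m then 1 else 0)
                   - (if m = None then 1 else 0))"
definition kterm where
  "kterm E b k e = csign E k * ((if kweight E b k = e then 1 else 0) - (if e = 0 then 1 else 0))"

lemma cc_resolve: "classical_crossings (resolve D S) = {..<ncross D}"
  by (auto simp: classical_crossings_def resolve_def)

lemma comps_res[simp]: "comps (resolve D S) = comps D" by (simp add: resolve_def)
lemma comp_of_res[simp]: "comp_of (resolve D S) = comp_of D" by (simp add: comp_of_def[abs_def])
lemma pos_of_res[simp]: "pos_of (resolve D S) = pos_of D" by (simp add: pos_of_def[abs_def])
lemma is_self_res[simp]: "is_self (resolve D S) = is_self D" by (simp add: is_self_def[abs_def])
lemma bil_res[simp]: "bilabel_before (resolve D S) = bilabel_before D" by (simp add: bilabel_before_def[abs_def])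
lemma bin_res[simp]: "bilab_in (resolve D S) = bilab_in D" by (simp add: bilab_in_def[abs_def])
lemma bout_res[simp]: "bilab_out (resolve D S) = bilab_out D" by (simp add: bilab_out_def[abs_def])
lemma lb_res[simp]: "label_before (resolve D S) = label_before D" by (simp add: label_before_def[abs_def])
lemma lin_res[simp]: "lab_in (resolve D S) = lab_in D" by (simp add: lab_in_def[abs_def])
lemma lout_res[simp]: "lab_out (resolve D S) = lab_out D" by (simp add: lab_out_def[abs_def])
lemma ctyp_res: "ctyp (resolve D S) k = ctyp (resolve D (if k \<in> S then {k} else {})) k"
  by (simp add: resolve_def)

lemma mterm_resolve: "mterm (resolve D S) k m = mterm (resolve D (if k \<in> S then {k} else {})) k m"
  unfolding mterm_def csign_def over_comp_def mweight_def comp_of_res bin_res bout_res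
  by (simp only: ctyp_res[of D S k])

lemma kterm_resolve: "kterm (resolve D S) b k e = kterm (resolve D (if k \<in> S then {k} else {})) b k e"
  unfolding kterm_def csign_def kweight_def lin_res lout_res
  by (simp only: ctyp_res[of D S k])

lemma finite_dbls: "finite (dbls D)"
  by (rule finite_subset[of _ "{..<ncross D}"]) (auto simp: dbls_def)

lemma mvaip_vanish: "card (dbls D) \<ge> 2 \<Longrightarrow> vext mvaip D = (\<lambda>_. 0)"
proof
  fix m assume c: "card (dbls D) \<ge> 2"
  have "vext mvaip D m = (\<Sum>S\<in>Pow (dbls D). (-1::int) ^ card (dbls D - S) *
     (\<Sum>k\<in>{..<ncross D}. (\<lambda>k b. mterm (resolve D (if b then {k} else {})) k m) k (k \<in> S)))"
    unfolding vext_def mvaip_def cc_resolve mterm_def[symmetric]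
    by (subst mterm_resolve) simp
  also have "\<dots> = 0" by (rule alt_sum[OF finite_dbls c]) simp
  finally show "vext mvaip D m = 0" .
qed

lemma kaip_vanish: "card (dbls D) \<ge> 2 \<Longrightarrow> vext (\<lambda>D'. kaip D' b) D = (\<lambda>_. 0)"
proof
  fix m assume c: "card (dbls D) \<ge> 2"
  have "vext (\<lambda>D'. kaip D' b) D m = (\<Sum>S\<in>Pow (dbls D). (-1::int) ^ card (dbls D - S) *
     (\<Sum>k\<in>{..<ncross D}. (\<lambda>k c. kterm (resolve D (if c then {k} else {})) b k m) k (k \<in> S)))"
    unfolding vext_def kaip_def cc_resolve kterm_def[symmetric]
    by (subst kterm_resolve) simp
  also have "\<dots> = 0" by (rule alt_sum[OF finite_dbls c]) simp
  finally show "vext (\<lambda>D'. kaip D' b) D m = 0" .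
qed

lemma vext_single: "dbls D = {d} \<Longrightarrow> vext V D m = V (resolve D {d}) m - V (resolve D {}) m"
proof -
  assume d: "dbls D = {d}"
  have P: "Pow {d} = {{}, {d}}" by auto
  show ?thesis unfolding vext_def d P by simp
qed

definition K :: vdiagram where
  "K = \<lparr>comps = [[(0,SL),(1,SL),(0,SR),(1,SR)]], ncross = 2, ctyp = (\<lambda>k. if k = 0 then Dbl else Pos)\<rparr>"

lemma UNIV_strand: "(UNIV :: strand set) = {SL, SR}"
  using strand.exhaust by auto

lemma K_wf: "wf_diagram K"
  unfolding wf_diagram_def K_def UNIV_strand by auto

lemma K_comps[simp]: "comps K = [[(0,SL),(1,SL),(0,SR),(1,SR)]]" by (simp add: K_def)
lemma K_ncross[simp]: "ncross K = 2" by (simp add: K_def)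
lemma K_ctyp[simp]: "ctyp K k = (if k = 0 then Dbl else Pos)" by (simp add: K_def)

lemma K_comp: "p \<in> set [(0,SL),(1,SL),(0,SR),(1,SR)] \<Longrightarrow> comp_of K p = 0"
  unfolding comp_of_def by (rule the_equality) auto

lemma K_comp0[simp]: "comp_of K (0,SL) = 0" "comp_of K (Suc 0,SL) = 0"
  "comp_of K (0,SR) = 0" "comp_of K (Suc 0,SR) = 0" by (auto intro!: K_comp)

lemma less4: "(j::nat) < 4 \<longleftrightarrow> j = 0 \<or> j = 1 \<or> j = 2 \<or> j = 3" by auto

lemma K_pos[simp]: "pos_of K (0,SL) = 0" "pos_of K (Suc 0,SL) = 1"
  "pos_of K (0,SR) = 2" "pos_of K (Suc 0,SR) = 3"
  unfolding pos_of_def K_comp0 by ((rule the_equality), auto simp: less_Suc_eq)+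

lemma K_self[simp]: "is_self K 0" "is_self K (Suc 0)" unfolding is_self_def by simp_all

lemma K_compat: "compatible K"
  unfolding compatible_def by simp

lemma K_dbls: "dbls K = {0}"
  unfolding dbls_def by auto

lemma res_ctyp[simp]: "ctyp (resolve D S) k = (if ctyp D k = Dbl then (if k \<in> S then Pos else Neg) else ctyp D k)"
  by (simp add: resolve_def)

lemma K_ext_m: "vext mvaip K None = -2"
  unfolding vext_single[OF K_dbls] mvaip_def cc_resolve
  by (simp add: numeral_2_eq_2 lessThan_Suc csign_def mono_def mweight_def over_comp_def
    bilab_in_def bilab_out_def bilabel_before_def bnorm_def ladd_def lsub_def lconst_def lvar_def
    idx_change_def)

lemma K_ext_k: "vext (\<lambda>D'. kaip D' b) K 0 = -2"
  unfolding vext_single[OF K_dbls] kaip_def cc_resolve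
  by (simp add: numeral_2_eq_2 lessThan_Suc csign_def kweight_def
    lab_in_def lab_out_def label_before_def idx_change_def)


theorem proposition5:
  shows
   "((\<forall>D. wf_diagram D \<and> compatible D \<and> card (dbls D) \<ge> 2 \<longrightarrow> vext mvaip D = (\<lambda>_. 0))
     \<and> (\<exists>D. wf_diagram D \<and> compatible D \<and> card (dbls D) = 1 \<and> vext mvaip D \<noteq> (\<lambda>_. 0)))
    \<and> ((\<forall>D b. wf_diagram D \<and> length (comps D) = 1 \<and> card (dbls D) \<ge> 2
            \<longrightarrow> vext (\<lambda>D'. kaip D' b) D = (\<lambda>_. 0))
     \<and> (\<exists>D b. wf_diagram D \<and> length (comps D) = 1 \<and> card (dbls D) = 1
            \<and> vext (\<lambda>D'. kaip D' b) D \<noteq> (\<lambda>_. 0)))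
    \<and> ((\<forall>D b. wf_diagram D \<and> compatible D \<and> card (dbls D) \<ge> 2
            \<longrightarrow> vext (\<lambda>D'. kaip D' b) D = (\<lambda>_. 0))
     \<and> (\<exists>D b. wf_diagram D \<and> compatible D \<and> card (dbls D) = 1
            \<and> vext (\<lambda>D'. kaip D' b) D \<noteq> (\<lambda>_. 0)))"
proof -
  have ne1: "vext mvaip K \<noteq> (\<lambda>_. 0)" using K_ext_m by (metis zero_neq_neg_numeral)
  have ne2: "vext (\<lambda>D'. kaip D' (\<lambda>_. 0)) K \<noteq> (\<lambda>_. 0)" using K_ext_k by (metis zero_neq_neg_numeral)
  have c: "card (dbls K) = 1" "length (comps K) = 1" by (simp_all add: K_dbls)
  have e1: "\<exists>D. wf_diagram D \<and> compatible D \<and> card (dbls D) = 1 \<and> vext mvaip D \<noteq> (\<lambda>_. 0)"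
    using K_wf K_compat ne1 c by blast
  have e2: "\<exists>D b. wf_diagram D \<and> length (comps D) = 1 \<and> card (dbls D) = 1
            \<and> vext (\<lambda>D'. kaip D' b) D \<noteq> (\<lambda>_. 0)"
    using K_wf ne2 c by blast
  have e3: "\<exists>D b. wf_diagram D \<and> compatible D \<and> card (dbls D) = 1
            \<and> vext (\<lambda>D'. kaip D' b) D \<noteq> (\<lambda>_. 0)"
    using K_wf K_compat ne2 c by blast
  show ?thesis using e1 e2 e3 by (simp add: mvaip_vanish kaip_vanish)
qed

end
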